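(* Every locatable digraph $D$ of order $n$ has at most $n-1$ location-forced vertices.
   Context: Digraphs are finite and may contain loops; between two distinct vertices there may be arcs in one or both directions, no repeated arcs. $N^-(v)=\{u: uv\text{ is an arc}\}$ (contains $v$ iff $v$ has a loop). $D$ is locatable if every vertex has at least one in-neighbour and no two distinct vertices have the same in-neighbourhood (equivalently, $D$ admits a set $S$ such that every vertex has an in-neighbour in $S$ and every pair of distinct vertices is distinguished by some vertex of $S$ lying in exactly one of their in-neighbourhoods). A vertex $v$ is location-forced if there are two distinct vertices $x,y$ with $N^-(x)\ominus N^-(y)=\{v\}$ ($\ominus$ = symmetric difference). *)

theory Defs
  imports Main
begin

definition digraph :: "'a set \<Rightarrow> ('a \<times> 'a) set \<Rightarrow> bool" where
  "digraph V A \<longleftrightarrow> finite V \<and> A \<subseteq> V \<times> V"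

definition in_nbhd :: "('a \<times> 'a) set \<Rightarrow> 'a \<Rightarrow> 'a set" where
  "in_nbhd A v = {u. (u, v) \<in> A}"

definition locatable :: "'a set \<Rightarrow> ('a \<times> 'a) set \<Rightarrow> bool" where
  "locatable V A \<longleftrightarrow>
     (\<forall>v\<in>V. in_nbhd A v \<noteq> {}) \<and>
     (\<forall>x\<in>V. \<forall>y\<in>V. x \<noteq> y \<longrightarrow> in_nbhd A x \<noteq> in_nbhd A y)"

definition location_forced :: "'a set \<Rightarrow> ('a \<times> 'a) set \<Rightarrow> 'a \<Rightarrow> bool" where
  "location_forced V A v \<longleftrightarrow>
     (\<exists>x\<in>V. \<exists>y\<in>V. x \<noteq> y \<and>
        (in_nbhd A x - in_nbhd A y) \<union> (in_nbhd A y - in_nbhd A x) = {v})"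

end

theory Submission
  imports Defs
begin

definition forcedF :: "'b set set \<Rightarrow> 'b set" where
  "forcedF F = {v. \<exists>X\<in>F. \<exists>Y\<in>F. (X - Y) \<union> (Y - X) = {v}}"

lemma forcedF_finite:
  assumes "finite F" shows "finite (forcedF F)"
proof -
  have "forcedF F \<subseteq> (\<lambda>(X,Y). the_elem ((X - Y) \<union> (Y - X))) ` (F \<times> F)"
  proof
    fix v assume "v \<in> forcedF F"
    then obtain X Y where "X \<in> F" "Y \<in> F" "(X - Y) \<union> (Y - X) = {v}"
      unfolding forcedF_def by blast
    then show "v \<in> (\<lambda>(X,Y). the_elem ((X - Y) \<union> (Y - X))) ` (F \<times> F)"
      by (intro image_eqI[where x="(X,Y)"]) auto
  qed
  then show ?thesis using assms finite_subset by blast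
qed

lemma forcedF_card:
  assumes "finite F" "F \<noteq> {}"
  shows "card (forcedF F) \<le> card F - 1"
  using assms
proof (induction "card F" arbitrary: F rule: less_induct)
  case less
  show ?case
  proof (cases "forcedF F = {}")
    case True then show ?thesis by simp
  next
    case False
    then obtain v where "v \<in> forcedF F" by blast
    then obtain X Y where XY: "X \<in> F" "Y \<in> F" "(X - Y) \<union> (Y - X) = {v}"
      unfolding forcedF_def by blast
    define F1 where "F1 = {Z\<in>F. v \<in> Z}"
    define F0 where "F0 = {Z\<in>F. v \<notin> Z}"
    have ne1: "F1 \<noteq> {}" and ne0: "F0 \<noteq> {}"
      using XY unfolding F1_def F0_def by blast+
    have fin1: "finite F1" and fin0: "finite F0" using less.prems unfolding F1_def F0_def by auto
    have un: "F = F0 \<union> F1" and dj: "F0 \<inter> F1 = {}" unfolding F1_def F0_def by auto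
    have cF: "card F = card F0 + card F1" using un dj fin0 fin1 card_Un_disjoint by metis
    have c0: "card F0 \<ge> 1" "card F1 \<ge> 1" using ne0 ne1 fin0 fin1
      by (simp_all add: Suc_le_eq card_gt_0_iff)
    have IH0: "card (forcedF F0) \<le> card F0 - 1"
      using less.hyps[of F0] fin0 ne0 cF c0 by linarith
    have IH1: "card (forcedF F1) \<le> card F1 - 1"
      using less.hyps[of F1] fin1 ne1 cF c0 by linarith
    have sub: "forcedF F \<subseteq> insert v (forcedF F0 \<union> forcedF F1)"
    proof
      fix u assume "u \<in> forcedF F"
      then obtain P Q where PQ: "P \<in> F" "Q \<in> F" "(P - Q) \<union> (Q - P) = {u}"
        unfolding forcedF_def by blast
      show "u \<in> insert v (forcedF F0 \<union> forcedF F1)"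
      proof (cases "u = v")
        case True then show ?thesis by simp
      next
        case False
        then have "v \<notin> (P - Q) \<union> (Q - P)" using PQ(3) by simp
        then have "v \<in> P \<longleftrightarrow> v \<in> Q" by blast
        then have "(P \<in> F0 \<and> Q \<in> F0) \<or> (P \<in> F1 \<and> Q \<in> F1)"
          using PQ unfolding F0_def F1_def by auto
        then show ?thesis using PQ unfolding forcedF_def by blast
      qed
    qed
    have "card (forcedF F) \<le> card (insert v (forcedF F0 \<union> forcedF F1))"
      using sub fin0 fin1 forcedF_finite by (intro card_mono) auto
    also have "\<dots> \<le> Suc (card (forcedF F0 \<union> forcedF F1))"
      by (simp add: card_insert_le_m1 card_insert_if)
    also have "\<dots> \<le> Suc (card (forcedF F0) + card (forcedF F1))"
      using card_Un_le by simp
    finally show ?thesis using IH0 IH1 cF c0 by linarith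
  qed
qed

theorem corollary8:
  fixes V :: "'a set" and A :: "('a \<times> 'a) set"
  assumes "digraph V A" and "locatable V A"
  shows "card {v \<in> V. location_forced V A v} \<le> card V - 1"
proof (cases "V = {}")
  case True then show ?thesis by simp
next
  case False
  have fin: "finite V" using assms(1) unfolding digraph_def by simp
  have inj: "inj_on (in_nbhd A) V" using assms(2) unfolding locatable_def inj_on_def by blast
  let ?F = "in_nbhd A ` V"
  have sub: "{v \<in> V. location_forced V A v} \<subseteq> forcedF ?F"
    unfolding location_forced_def forcedF_def by blast
  have "card {v \<in> V. location_forced V A v} \<le> card (forcedF ?F)"
    using sub fin by (intro card_mono forcedF_finite) auto
  also have "\<dots> \<le> card ?F - 1" using fin False by (intro forcedF_card) auto
  also have "card ?F = card V" using inj card_image by blast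
  finally show ?thesis .
qed

end
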